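(* For natural numbers $n\le m$, $\dim(W_{n,m})\leq\binom{m}{n}\cdot\frac{(m-1)!}{(n-1)!}$.
   Context: $\mathbb{F}$ is a field of characteristic zero; $\mathbb{F}\langle X\rangle$ the free non-unitary associative algebra on $X=\{x_1,x_2,\dots\}$; $(x^n)^T$ the smallest ideal containing $x^n$ invariant under all algebra endomorphisms; $V_m$ the space of multilinear polynomials of degree $m$ in $x_1,\dots,x_m$; $W_{n,m}:=V_m\cap(x^n)^T$. *)

theory Defs
  imports Complex_Main "HOL-Library.Function_Algebras"
begin

text \<open>Free non-unitary associative algebra F<X> on X = {x_0, x_1, ...}
  (x_i is encoded by the natural number i, so the paper's x_1 is index 0).
  A polynomial is a finitely supported coefficient function on words
  (nat lists); the empty word has coefficient 0 (non-unitary).\<close>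

type_synonym 'a ncpoly = "nat list \<Rightarrow> 'a"

definition fpoly :: "('a::field) ncpoly set" where
  "fpoly = {p. finite {w. p w \<noteq> 0} \<and> p [] = 0}"

definition nc_add :: "('a::field) ncpoly \<Rightarrow> 'a ncpoly \<Rightarrow> 'a ncpoly" where
  "nc_add p q = (\<lambda>w. p w + q w)"

definition nc_scale :: "'a::field \<Rightarrow> 'a ncpoly \<Rightarrow> 'a ncpoly" where
  "nc_scale c p = (\<lambda>w. c * p w)"

definition nc_mult :: "('a::field) ncpoly \<Rightarrow> 'a ncpoly \<Rightarrow> 'a ncpoly" where
  "nc_mult p q = (\<lambda>w. \<Sum>i\<in>{0..length w}. p (take i w) * q (drop i w))"

definition nc_mono :: "nat list \<Rightarrow> ('a::field) ncpoly" where
  "nc_mono u = (\<lambda>w. if w = u then 1 else 0)"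

fun nc_word_subst :: "(nat \<Rightarrow> ('a::field) ncpoly) \<Rightarrow> nat list \<Rightarrow> 'a ncpoly" where
  "nc_word_subst \<sigma> [] = (\<lambda>_. 0)"
| "nc_word_subst \<sigma> [a] = \<sigma> a"
| "nc_word_subst \<sigma> (a # b # w) = nc_mult (\<sigma> a) (nc_word_subst \<sigma> (b # w))"

definition nc_subst :: "(nat \<Rightarrow> ('a::field) ncpoly) \<Rightarrow> 'a ncpoly \<Rightarrow> 'a ncpoly" where
  "nc_subst \<sigma> p = (\<lambda>w. \<Sum>u\<in>{u. p u \<noteq> 0}. p u * nc_word_subst \<sigma> u w)"

inductive_set T_ideal :: "('a::field) ncpoly \<Rightarrow> 'a ncpoly set" for f where
  gen: "f \<in> T_ideal f"
| zero: "(\<lambda>_. 0) \<in> T_ideal f"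
| add: "p \<in> T_ideal f \<Longrightarrow> q \<in> T_ideal f \<Longrightarrow> nc_add p q \<in> T_ideal f"
| scale: "p \<in> T_ideal f \<Longrightarrow> nc_scale c p \<in> T_ideal f"
| mult_left: "p \<in> T_ideal f \<Longrightarrow> a \<in> fpoly \<Longrightarrow> nc_mult a p \<in> T_ideal f"
| mult_right: "p \<in> T_ideal f \<Longrightarrow> a \<in> fpoly \<Longrightarrow> nc_mult p a \<in> T_ideal f"
| endo: "p \<in> T_ideal f \<Longrightarrow> (\<And>i. \<sigma> i \<in> fpoly) \<Longrightarrow> nc_subst \<sigma> p \<in> T_ideal f"

definition x_pow :: "nat \<Rightarrow> ('a::field) ncpoly" where
  "x_pow n = nc_mono (replicate n 0)"

definition V :: "nat \<Rightarrow> ('a::field) ncpoly set" where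
  "V m = {p \<in> fpoly. \<forall>w. p w \<noteq> 0 \<longrightarrow> distinct w \<and> set w = {0..<m}}"

definition W :: "nat \<Rightarrow> nat \<Rightarrow> ('a::field) ncpoly set" where
  "W n m = V m \<inter> T_ideal (x_pow n)"

definition ncdim :: "('a::field) ncpoly set \<Rightarrow> nat" where
  "ncdim S = vector_space.dim (nc_scale :: 'a \<Rightarrow> 'a ncpoly \<Rightarrow> 'a ncpoly) S"

end

theory Submission
  imports Defs "HOL-Library.Poly_Mapping" "HOL-Library.Multiset"
begin

instantiation list :: (type) monoid_add
begin
definition zero_list_def: "0 = []"
definition plus_list_def: "xs + ys = xs @ ys"
instance by standard (auto simp: zero_list_def plus_list_def)
end

type_synonym 'a R = "nat list \<Rightarrow>\<^sub>0 'a"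

lemma Sum_any_when_eq: "(\<Sum>q. (f q when q = a)) = (f a :: 'b::comm_monoid_add)"
  by (simp add: when_def)

lemma lookup_times:
  fixes P Q :: "'a::field R"
  shows "Poly_Mapping.lookup (P * Q) w = (\<Sum>i\<le>length w. Poly_Mapping.lookup P (take i w) * Poly_Mapping.lookup Q (drop i w))"
proof -
  have inner: "(\<Sum>q. (Poly_Mapping.lookup Q q when w = l + q)) =
      (if take (length l) w = l then Poly_Mapping.lookup Q (drop (length l) w) else 0)" for l
  proof -
    have "(\<lambda>q. (Poly_Mapping.lookup Q q when w = l + q)) =
          (\<lambda>q. ((if take (length l) w = l then Poly_Mapping.lookup Q q else 0) when q = drop (length l) w))"
      by (auto simp: fun_eq_iff when_def plus_list_def append_eq_conv_conj) (metis append_take_drop_id)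
    then have "(\<Sum>q. (Poly_Mapping.lookup Q q when w = l + q)) = (\<Sum>q. ((if take (length l) w = l then Poly_Mapping.lookup Q q else 0) when q = drop (length l) w))"
      by (rule arg_cong[of _ _ Sum_any])
    also have "\<dots> = (if take (length l) w = l then Poly_Mapping.lookup Q (drop (length l) w) else 0)"
      by (rule Sum_any_when_eq)
    finally show ?thesis .
  qed
  have "Poly_Mapping.lookup (P * Q) w = (\<Sum>l. Poly_Mapping.lookup P l * (if take (length l) w = l then Poly_Mapping.lookup Q (drop (length l) w) else 0))"
    unfolding lookup_mult inner by (rule refl)
  also have "\<dots> = (\<Sum>l\<in>(\<lambda>i. take i w) ` {..length w}. Poly_Mapping.lookup P l * (if take (length l) w = l then Poly_Mapping.lookup Q (drop (length l) w) else 0))"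
    apply (rule Sum_any.expand_superset)
     apply simp
    apply (auto simp: image_iff)
    by (metis atMost_iff length_take min.cobounded2 min.commute)
  also have "\<dots> = (\<Sum>i\<le>length w. Poly_Mapping.lookup P (take i w) * Poly_Mapping.lookup Q (drop i w))"
    apply (subst sum.reindex)
     apply (auto simp: inj_on_def)
    by (metis length_take min.absorb2)
  finally show ?thesis .
qed

abbreviation lk :: "'a::field R \<Rightarrow> nat list \<Rightarrow> 'a" where "lk \<equiv> Poly_Mapping.lookup"

definition sc :: "'a::field \<Rightarrow> 'a R \<Rightarrow> 'a R" where
  "sc c P = Poly_Mapping.single [] c * P"

lemma lookup_sc[simp]: "lk (sc c P) w = c * lk P w"
proof -
  have "lk (sc c P) w = (\<Sum>i\<le>length w. (c when [] = take i w) * lk P (drop i w))"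
    by (simp add: sc_def lookup_times lookup_single)
  also have "\<dots> = (\<Sum>i\<in>{0}. (c when [] = take i w) * lk P (drop i w))"
    by (rule sum.mono_neutral_right) (auto simp: when_def)
  finally show ?thesis by (simp add: when_def)
qed

lemma lk_eqI: "(\<And>w. lk P w = lk Q w) \<Longrightarrow> P = Q"
  by (rule poly_mapping_eqI)

lemma sc_add_right: "sc c (P + Q) = sc c P + sc c Q"
  by (rule lk_eqI) (simp add: lookup_add algebra_simps)
lemma sc_add_left: "sc (c + d) P = sc c P + sc d P"
  by (rule lk_eqI) (simp add: lookup_add algebra_simps)
lemma sc_sc[simp]: "sc c (sc d P) = sc (c * d) P"
  by (rule lk_eqI) (simp add: algebra_simps)
lemma sc_one[simp]: "sc 1 P = P"
  by (rule lk_eqI) simp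
lemma sc_zero[simp]: "sc 0 P = 0" "sc c 0 = 0"
  by (rule lk_eqI, simp)+
lemma sc_minus: "sc c (P - Q) = sc c P - sc c Q"
  by (rule lk_eqI) (simp add: lookup_minus algebra_simps)
lemma sc_uminus: "sc c (- Q) = - sc c Q"
  by (rule lk_eqI) (simp add: algebra_simps)

interpretation RS: vector_space "sc :: 'a::field \<Rightarrow> 'a R \<Rightarrow> 'a R"
  by standard (auto simp: sc_add_right sc_add_left)

lemma sc_mult_left: "sc c P * Q = sc c (P * Q)"
  by (simp add: sc_def mult.assoc)

lemma sc_mult_right: "P * sc c Q = sc c (P * Q)"
  by (rule lk_eqI) (simp add: lookup_times sum_distrib_left algebra_simps)

lemma sc_sum: "sc c (sum f A) = sum (\<lambda>x. sc c (f x)) A"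
  by (induction A rule: infinite_finite_induct) (auto simp: sc_add_right)

lemma sum_sc: "sc (sum f A) P = sum (\<lambda>x. sc (f x) P) A"
  by (induction A rule: infinite_finite_induct) (auto simp: sc_add_left)

lemma lk_times_Nil: "lk (P * Q) [] = lk P [] * lk Q []"
  by (simp add: lookup_times)

definition nc0 :: "'a::field R \<Rightarrow> bool" where "nc0 P \<longleftrightarrow> lk P [] = 0"

lemma nc0_times: "nc0 P \<Longrightarrow> nc0 (P * Q)" "nc0 Q \<Longrightarrow> nc0 (P * Q)"
  by (auto simp: nc0_def lk_times_Nil)
lemma nc0_add: "nc0 P \<Longrightarrow> nc0 Q \<Longrightarrow> nc0 (P + Q)"
  by (auto simp: nc0_def lookup_add)
lemma nc0_sc: "nc0 P \<Longrightarrow> nc0 (sc c P)"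
  by (auto simp: nc0_def)
lemma nc0_sum: "(\<And>x. x \<in> A \<Longrightarrow> nc0 (f x)) \<Longrightarrow> nc0 (sum f A)"
  by (induction A rule: infinite_finite_induct) (auto simp: nc0_def lookup_add)
lemma nc0_zero[simp]: "nc0 0" by (simp add: nc0_def)
lemma nc0_power: "nc0 P \<Longrightarrow> n \<ge> 1 \<Longrightarrow> nc0 (P ^ n)"
  by (cases n) (auto intro: nc0_times)

lemma nc0_span: "x \<in> RS.span S \<Longrightarrow> (\<And>y. y \<in> S \<Longrightarrow> nc0 y) \<Longrightarrow> nc0 x"
  by (induction rule: RS.span_induct_alt) (auto intro!: nc0_add nc0_sc)

lemma fpoly_lk: "lk P [] = 0 \<Longrightarrow> lk P \<in> fpoly"
  by (simp add: fpoly_def)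

lemma fpoly_ex: "p \<in> fpoly \<Longrightarrow> \<exists>P. p = lk P \<and> nc0 P"
  by (rule exI[of _ "Abs_poly_mapping p"]) (auto simp: fpoly_def nc0_def)

lemma nc_mult_lk: "nc_mult (lk P) (lk Q) = lk (P * Q)"
  by (simp add: nc_mult_def fun_eq_iff lookup_times atLeast0AtMost)

lemma nc_add_lk: "nc_add (lk P) (lk Q) = lk (P + Q)"
  by (simp add: nc_add_def fun_eq_iff lookup_add)

lemma nc_scale_lk: "nc_scale c (lk P) = lk (sc c P)"
  by (simp add: nc_scale_def fun_eq_iff)

lemma zero_lk: "(\<lambda>_. 0) = lk 0"
  by (simp add: fun_eq_iff)

lemma single_Nil_one: "Poly_Mapping.single [] (1::'a::field) = 1"
  by (metis single_one zero_list_def)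

lemma single_pow: "(Poly_Mapping.single u (1::'a::field)) ^ n = Poly_Mapping.single (concat (replicate n u)) 1"
  by (induction n) (auto simp: mult_single plus_list_def single_Nil_one)

lemma x_pow_lk: "x_pow n = lk ((Poly_Mapping.single [0] (1::'a::field)) ^ n)"
  by (simp add: single_pow x_pow_def nc_mono_def fun_eq_iff lookup_single when_def concat_replicate_trivial eq_commute)

lemma poly_sum_singles: "P = (\<Sum>k\<in>Poly_Mapping.keys P. Poly_Mapping.single k (lk P k))"
  by (rule lk_eqI) (auto simp: lookup_sum lookup_single when_def in_keys_iff)

definition ws :: "(nat \<Rightarrow> 'a::field R) \<Rightarrow> nat list \<Rightarrow> 'a R" where
  "ws \<sigma> w = prod_list (map \<sigma> w)"

definition Subst :: "(nat \<Rightarrow> 'a::field R) \<Rightarrow> 'a R \<Rightarrow> 'a R" where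
  "Subst \<sigma> P = (\<Sum>k\<in>Poly_Mapping.keys P. sc (lk P k) (ws \<sigma> k))"

lemma Subst_superset:
  assumes "finite F" "Poly_Mapping.keys P \<subseteq> F"
  shows "Subst \<sigma> P = (\<Sum>k\<in>F. sc (lk P k) (ws \<sigma> k))"
  unfolding Subst_def
  by (rule sum.mono_neutral_left) (use assms in \<open>auto simp: in_keys_iff\<close>)

lemma Subst_add: "Subst \<sigma> (P + Q) = Subst \<sigma> P + Subst \<sigma> Q"
proof -
  let ?F = "Poly_Mapping.keys P \<union> Poly_Mapping.keys Q"
  have "Subst \<sigma> (P + Q) = (\<Sum>k\<in>?F. sc (lk (P + Q) k) (ws \<sigma> k))"
    by (rule Subst_superset) (auto dest: set_mp[OF keys_add])
  also have "\<dots> = (\<Sum>k\<in>?F. sc (lk P k) (ws \<sigma> k)) + (\<Sum>k\<in>?F. sc (lk Q k) (ws \<sigma> k))"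
    by (simp add: lookup_add sc_add_left sum.distrib)
  also have "\<dots> = Subst \<sigma> P + Subst \<sigma> Q"
    by (simp add: Subst_superset[symmetric])
  finally show ?thesis .
qed

lemma Subst_zero[simp]: "Subst \<sigma> 0 = 0"
  by (simp add: Subst_def)

lemma Subst_sc: "Subst \<sigma> (sc c P) = sc c (Subst \<sigma> P)"
proof -
  have "Subst \<sigma> (sc c P) = (\<Sum>k\<in>Poly_Mapping.keys P. sc (lk (sc c P) k) (ws \<sigma> k))"
    by (rule Subst_superset) (auto simp: in_keys_iff)
  also have "\<dots> = sc c (Subst \<sigma> P)"
    by (simp add: Subst_def sc_sum)
  finally show ?thesis .
qed

lemma Subst_sum: "Subst \<sigma> (sum f A) = (\<Sum>x\<in>A. Subst \<sigma> (f x))"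
  by (induction A rule: infinite_finite_induct) (auto simp: Subst_add)

lemma Subst_single: "Subst \<sigma> (Poly_Mapping.single k c) = sc c (ws \<sigma> k)"
proof -
  have "Subst \<sigma> (Poly_Mapping.single k c) = (\<Sum>k'\<in>{k}. sc (lk (Poly_Mapping.single k c) k') (ws \<sigma> k'))"
    by (rule Subst_superset) (auto simp: in_keys_iff lookup_single when_def)
  then show ?thesis by simp
qed

lemma ws_append: "ws \<sigma> (u @ v) = ws \<sigma> u * ws \<sigma> v"
  by (simp add: ws_def)

lemma Subst_mult: "Subst \<sigma> (P * Q) = Subst \<sigma> P * Subst \<sigma> Q"
proof -
  have "P * Q = (\<Sum>k\<in>Poly_Mapping.keys P. Poly_Mapping.single k (lk P k)) *
                (\<Sum>l\<in>Poly_Mapping.keys Q. Poly_Mapping.single l (lk Q l))"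
    using poly_sum_singles by metis
  also have "\<dots> = (\<Sum>k\<in>Poly_Mapping.keys P. \<Sum>l\<in>Poly_Mapping.keys Q.
        Poly_Mapping.single (k @ l) (lk P k * lk Q l))"
    by (simp add: sum_product mult_single plus_list_def)
  finally have "Subst \<sigma> (P * Q) = (\<Sum>k\<in>Poly_Mapping.keys P. \<Sum>l\<in>Poly_Mapping.keys Q.
        sc (lk P k * lk Q l) (ws \<sigma> (k @ l)))"
    by (simp add: Subst_sum Subst_single)
  also have "\<dots> = (\<Sum>k\<in>Poly_Mapping.keys P. sc (lk P k) (ws \<sigma> k)) *
       (\<Sum>l\<in>Poly_Mapping.keys Q. sc (lk Q l) (ws \<sigma> l))"
    by (simp add: sum_product ws_append sc_mult_left sc_mult_right mult.commute)
  finally show ?thesis by (simp add: Subst_def)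
qed

lemma Subst_one: "Subst \<sigma> 1 = 1"
  by (metis Subst_single single_Nil_one sc_one ws_def list.map(1) prod_list.Nil)

lemma Subst_power: "Subst \<sigma> (P ^ n) = (Subst \<sigma> P) ^ n"
  by (induction n) (auto simp: Subst_one Subst_mult)

lemma ws_nc0: "(\<And>i. nc0 (\<sigma> i)) \<Longrightarrow> u \<noteq> [] \<Longrightarrow> nc0 (ws \<sigma> u)"
  by (cases u) (auto simp: ws_def intro: nc0_times)

lemma Subst_nc0:
  assumes "\<And>i. nc0 (\<sigma> i)" "nc0 P"
  shows "nc0 (Subst \<sigma> P)"
  unfolding Subst_def
proof (rule nc0_sum)
  fix k assume "k \<in> Poly_Mapping.keys P"
  then have "k \<noteq> []" using assms(2) by (auto simp: nc0_def in_keys_iff)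
  then show "nc0 (sc (lk P k) (ws \<sigma> k))" by (intro nc0_sc ws_nc0 assms)
qed

lemma nc_word_subst_lk:
  assumes "\<And>i. \<sigma>f i = lk (\<sigma> i)"
  shows "u \<noteq> [] \<Longrightarrow> nc_word_subst \<sigma>f u = lk (ws \<sigma> u)"
proof (induction u)
  case (Cons a u)
  then show ?case using assms
    by (cases u) (auto simp: ws_def nc_mult_lk)
qed auto

lemma nc_subst_lk:
  assumes "\<And>i. \<sigma>f i = lk (\<sigma> i)" "nc0 P"
  shows "nc_subst \<sigma>f (lk P) = lk (Subst \<sigma> P)"
proof (rule ext)
  fix w
  have "nc_subst \<sigma>f (lk P) w = (\<Sum>u\<in>Poly_Mapping.keys P. lk P u * nc_word_subst \<sigma>f u w)"
    by (simp add: nc_subst_def in_keys_iff keys.rep_eq)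
  also have "\<dots> = (\<Sum>u\<in>Poly_Mapping.keys P. lk P u * lk (ws \<sigma> u) w)"
  proof (rule sum.cong)
    fix u assume "u \<in> Poly_Mapping.keys P"
    then have "u \<noteq> []" using assms(2) by (auto simp: nc0_def in_keys_iff)
    then show "lk P u * nc_word_subst \<sigma>f u w = lk P u * lk (ws \<sigma> u) w"
      using nc_word_subst_lk[OF assms(1)] by simp
  qed simp
  also have "\<dots> = lk (Subst \<sigma> P) w"
    by (simp add: Subst_def lookup_sum)
  finally show "nc_subst \<sigma>f (lk P) w = lk (Subst \<sigma> P) w" .
qed

context vector_space
begin

lemma extract_top:
  assumes U: "subspace U" and ch: "\<And>k::nat. of_nat (Suc k) \<noteq> (0::'a)"
  shows "(\<And>t. (\<Sum>j\<le>d. scale (t ^ j) (c j)) \<in> U) \<Longrightarrow> c d \<in> U"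
proof (induction d arbitrary: c)
  case 0
  then show ?case using 0[of 0] by simp
next
  case (Suc d)
  define c' where "c' i = (\<Sum>j\<in>{Suc i..Suc d}. scale (of_nat (j choose i)) (c j))" for i
  have diff: "(\<Sum>j\<le>Suc d. scale ((t+1) ^ j) (c j)) - (\<Sum>j\<le>Suc d. scale (t ^ j) (c j))
       = (\<Sum>i\<le>d. scale (t ^ i) (c' i))" for t
  proof -
    have bin: "(t+1)^j - t^j = (\<Sum>i<j. of_nat (j choose i) * t^i)" for j
    proof -
      have "(t+1)^j = (\<Sum>i\<le>j. of_nat (j choose i) * t^i)"
        by (simp add: binomial_ring)
      also have "\<dots> = (\<Sum>i<j. of_nat (j choose i) * t^i) + t^j"
        by (simp add: lessThan_Suc_atMost[symmetric])
      finally show ?thesis by simp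
    qed
    have "(\<Sum>j\<le>Suc d. scale ((t+1) ^ j) (c j)) - (\<Sum>j\<le>Suc d. scale (t ^ j) (c j))
        = (\<Sum>j\<le>Suc d. scale ((t+1) ^ j - t^j) (c j))"
      by (simp add: sum_subtractf scale_left_diff_distrib)
    also have "\<dots> = (\<Sum>j\<le>Suc d. \<Sum>i<j. scale (t^i) (scale (of_nat (j choose i)) (c j)))"
      by (simp add: bin scale_sum_left mult.commute)
    also have "\<dots> = (\<Sum>i<Suc d. \<Sum>j\<in>{Suc i..Suc d}. scale (t^i) (scale (of_nat (j choose i)) (c j)))"
      by (rule sum.nested_swap')
    also have "\<dots> = (\<Sum>i\<le>d. scale (t ^ i) (c' i))"
      by (simp add: c'_def scale_sum_right scale_right_distrib lessThan_Suc_atMost)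
    finally show ?thesis .
  qed
  have "(\<Sum>i\<le>d. scale (t ^ i) (c' i)) \<in> U" for t
    using diff[of t] Suc.prems[of "t+1"] Suc.prems[of t] U by (metis subspace_diff)
  then have "c' d \<in> U" by (rule Suc.IH)
  moreover have "c' d = scale (of_nat (Suc d)) (c (Suc d))"
    by (simp add: c'_def)
  ultimately have "scale (of_nat (Suc d)) (c (Suc d)) \<in> U" by simp
  then have "scale (inverse (of_nat (Suc d))) (scale (of_nat (Suc d)) (c (Suc d))) \<in> U"
    using U by (rule subspace_scale[rotated])
  then show ?case using ch[of d] by simp
qed

lemma extract_all:
  assumes U: "subspace U" and ch: "\<And>k::nat. of_nat (Suc k) \<noteq> (0::'a)"
  shows "(\<And>t. (\<Sum>j\<le>d. scale (t ^ j) (c j)) \<in> U) \<Longrightarrow> j \<le> d \<Longrightarrow> c j \<in> U"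
proof (induction d arbitrary: j)
  case 0
  then show ?case using extract_top[OF U ch, where d=0 and c=c] by simp
next
  case (Suc d)
  have top: "c (Suc d) \<in> U" using extract_top[OF U ch, where d="Suc d" and c=c] Suc.prems(1) by blast
  have "(\<Sum>j\<le>d. scale (t ^ j) (c j)) \<in> U" for t
  proof -
    have "(\<Sum>j\<le>d. scale (t ^ j) (c j)) = (\<Sum>j\<le>Suc d. scale (t ^ j) (c j)) - scale (t^Suc d) (c (Suc d))"
      by simp
    then show ?thesis using Suc.prems(1)[of t] top U by (metis subspace_diff subspace_scale)
  qed
  then show ?case using Suc top by (cases "j = Suc d") auto
qed

lemma extract_coeff:
  assumes U: "subspace U" and ch: "\<And>k::nat. of_nat (Suc k) \<noteq> (0::'a)" and I: "finite I"
    and h: "\<And>t. (\<Sum>i\<in>I. scale (t ^ e i) (f i)) \<in> U"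
  shows "(\<Sum>i\<in>{i\<in>I. e i = k}. f i) \<in> U"
proof (cases "k \<le> Max (e ` I)")
  case True
  let ?d = "Max (e ` I)"
  have "(\<Sum>i\<in>I. scale (t ^ e i) (f i)) = (\<Sum>j\<le>?d. scale (t ^ j) (\<Sum>i\<in>{i\<in>I. e i = j}. f i))" for t
  proof -
    have "(\<Sum>j\<le>?d. scale (t ^ j) (\<Sum>i\<in>{i\<in>I. e i = j}. f i)) =
          (\<Sum>j\<le>?d. (\<Sum>i\<in>{i\<in>I. e i = j}. scale (t ^ e i) (f i)))"
      by (simp add: scale_sum_right)
    also have "\<dots> = (\<Sum>i\<in>I. scale (t ^ e i) (f i))"
      by (rule sum.group) (use I in auto)
    finally show ?thesis by simp
  qed
  then have "(\<Sum>j\<le>?d. scale (t ^ j) (\<Sum>i\<in>{i\<in>I. e i = j}. f i)) \<in> U" for t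
    using h[of t] by simp
  from extract_all[OF U ch this True] show ?thesis .
next
  case False
  then have "{i\<in>I. e i = k} = {}" using I by auto
  then show ?thesis using U by (metis sum.empty subspace_0)
qed

end

definition LL :: "nat \<Rightarrow> 'b set \<Rightarrow> 'b list set" where
  "LL N X = {xs. set xs \<subseteq> X \<and> length xs = N}"

lemma LL_finite: "finite X \<Longrightarrow> finite (LL N X)"
  unfolding LL_def by (rule finite_lists_length_eq)

lemma LL_Suc: "LL (Suc N) X = (\<lambda>(x, xs). x # xs) ` (X \<times> LL N X)"
  unfolding LL_def by (auto simp: image_iff length_Suc_conv)

lemma LL_0: "LL 0 X = {[]}"
  unfolding LL_def by auto

lemma expand_pow:
  fixes f :: "'b \<Rightarrow> 'a::field R"
  assumes X: "finite X"
  shows "(\<Sum>x\<in>X. sc (w x) (f x)) ^ N =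
     (\<Sum>xs\<in>LL N X. sc (prod_list (map w xs)) (prod_list (map f xs)))"
proof (induction N)
  case 0
  then show ?case by (simp add: LL_0)
next
  case (Suc N)
  have "(\<Sum>x\<in>X. sc (w x) (f x)) ^ Suc N =
      (\<Sum>x\<in>X. sc (w x) (f x)) * (\<Sum>xs\<in>LL N X. sc (prod_list (map w xs)) (prod_list (map f xs)))"
    by (simp add: Suc)
  also have "\<dots> = (\<Sum>x\<in>X. \<Sum>xs\<in>LL N X. sc (prod_list (map w (x#xs))) (prod_list (map f (x#xs))))"
    by (simp add: sum_product sc_mult_left sc_mult_right mult.commute)
  also have "\<dots> = (\<Sum>p\<in>X \<times> LL N X. (\<lambda>ys. sc (prod_list (map w ys)) (prod_list (map f ys))) ((\<lambda>(x, xs). x # xs) p))"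
    by (simp add: sum.cartesian_product split_def)
  also have "\<dots> = (\<Sum>ys\<in>LL (Suc N) X. sc (prod_list (map w ys)) (prod_list (map f ys)))"
    unfolding LL_Suc by (subst sum.reindex) (auto simp: inj_on_def split_def)
  finally show ?case .
qed

definition cnt :: "'b \<Rightarrow> 'b list \<Rightarrow> nat" where
  "cnt a xs = length (filter (\<lambda>x. x = a) xs)"

lemma prod_list_ind: "prod_list (map (\<lambda>x. if x = a then t else 1) xs) = t ^ cnt a xs"
  by (induction xs) (auto simp: cnt_def)

lemma cnt_card: "cnt a xs = card {q. q < length xs \<and> xs ! q = a}"
  by (simp add: cnt_def length_filter_conv_card)

lemma cnt_one_obtain:
  assumes "cnt a xs = 1"
  obtains i where "i < length xs" "xs ! i = a" "\<And>q. q < length xs \<Longrightarrow> xs ! q = a \<Longrightarrow> q = i"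
proof -
  from assms have "card {q. q < length xs \<and> xs ! q = a} = Suc 0" by (simp add: cnt_card)
  then obtain i where "{q. q < length xs \<and> xs ! q = a} = {i}" by (auto simp: card_Suc_eq)
  then show ?thesis using that by blast
qed

lemma pos1:
  assumes "set xs \<subseteq> {0,1::nat}" "cnt 1 xs = 1"
  shows "\<exists>i<length xs. xs = map (\<lambda>q. if q = i then 1 else 0) [0..<length xs]"
proof -
  obtain i where i: "i < length xs" "xs ! i = 1" "\<And>q. q < length xs \<Longrightarrow> xs ! q = 1 \<Longrightarrow> q = i"
    using cnt_one_obtain[OF assms(2)] by blast
  have "xs = map (\<lambda>q. if q = i then 1 else 0) [0..<length xs]"
  proof (rule nth_equalityI)
    fix q assume q: "q < length xs"
    then have "xs ! q \<in> {0,1}" using assms(1) nth_mem by blast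
    show "xs ! q = map (\<lambda>q. if q = i then 1 else 0) [0..<length xs] ! q"
    proof (cases "xs ! q = 1")
      case True
      then have "q = i" using i(3) q by blast
      then show ?thesis using i(2) q by simp
    next
      case False
      then have "q \<noteq> i" "xs ! q = 0" using i(2) \<open>xs ! q \<in> {0,1}\<close> by auto
      then show ?thesis using q by simp
    qed
  qed simp
  then show ?thesis using i by blast
qed

lemma pos2:
  assumes "set xs \<subseteq> {0,1,2::nat}" "cnt 1 xs = 1" "cnt 2 xs = 1"
  shows "\<exists>i j. i<length xs \<and> j < length xs \<and> i \<noteq> j \<and>
     xs = map (\<lambda>q. if q = i then 1 else if q = j then 2 else 0) [0..<length xs]"
proof -
  obtain i where i: "i < length xs" "xs ! i = 1" "\<And>q. q < length xs \<Longrightarrow> xs ! q = 1 \<Longrightarrow> q = i"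
    using cnt_one_obtain[OF assms(2)] by blast
  obtain j where j: "j < length xs" "xs ! j = 2" "\<And>q. q < length xs \<Longrightarrow> xs ! q = 2 \<Longrightarrow> q = j"
    using cnt_one_obtain[OF assms(3)] by blast
  have "xs = map (\<lambda>q. if q = i then 1 else if q = j then 2 else 0) [0..<length xs]"
  proof (rule nth_equalityI)
    fix q assume q: "q < length xs"
    then have "xs ! q \<in> {0,1,2}" using assms(1) nth_mem by blast
    show "xs ! q = map (\<lambda>q. if q = i then 1 else if q = j then 2 else 0) [0..<length xs] ! q"
    proof (cases "xs ! q = 1")
      case True
      then have "q = i" using i(3) q by blast
      then show ?thesis using i(2) q by simp
    next
      case False
      show ?thesis
      proof (cases "xs ! q = 2")
        case True
        then have "q = j" using j(3) q by blast
        then have "q \<noteq> i" using i(2) j(2) by auto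
        then show ?thesis using j(2) q \<open>q = j\<close> by simp
      next
        case F2: False
        then have "q \<noteq> i" "q \<noteq> j" "xs ! q = 0" using i(2) j(2) False \<open>xs ! q \<in> {0,1,2}\<close> by auto
        then show ?thesis using q by simp
      qed
    qed
  qed simp
  moreover have "i \<noteq> j" using i(2) j(2) by auto
  ultimately show ?thesis using i j by blast
qed

lemma prod_list_powG:
  assumes "\<And>q. a \<le> q \<Longrightarrow> q < b \<Longrightarrow> h q = G ^ k q"
  shows "prod_list (map h [a..<b]) = (G::'c::monoid_mult) ^ (\<Sum>q\<in>{a..<b}. k q)"
  using assms
proof (induction b)
  case 0
  then show ?case by simp
next
  case (Suc b)
  show ?case
  proof (cases "a \<le> b")
    case True
    then have "prod_list (map h [a..<Suc b]) = prod_list (map h [a..<b]) * h b" by simp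
    also have "\<dots> = G ^ (\<Sum>q\<in>{a..<b}. k q) * G ^ k b" using Suc True by simp
    also have "\<dots> = G ^ (\<Sum>q\<in>{a..<Suc b}. k q)" using True by (simp add: power_add)
    finally show ?thesis .
  next
    case False
    then show ?thesis by simp
  qed
qed

lemma prod_list_split:
  assumes "i < n"
  shows "prod_list (map h [0..<n]) = prod_list (map h [0..<i]) * h i * prod_list (map h [Suc i..<n])"
proof -
  have "[0..<n] = [0..<i] @ [i..<n]" using upt_add_eq_append[of 0 i "n - i"] assms by simp
  also have "[i..<n] = i # [Suc i..<n]" using assms by (simp add: upt_conv_Cons)
  finally have "[0..<n] = [0..<i] @ i # [Suc i..<n]" .
  then show ?thesis by (simp add: mult.assoc)
qed

definition Pw :: "nat \<Rightarrow> 'a::field R set" where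
  "Pw n = {H ^ n | H. nc0 H}"

definition Sp :: "nat \<Rightarrow> 'a::field R set" where
  "Sp n = RS.span (Pw n)"

lemma Sp_subspace: "RS.subspace (Sp n)"
  by (simp add: Sp_def)

lemma pow_in_Sp: "nc0 H \<Longrightarrow> H ^ n \<in> Sp n"
  unfolding Sp_def Pw_def by (rule RS.span_base) blast

lemma extract_R:
  fixes f :: "'b \<Rightarrow> 'a::field_char_0 R"
  assumes "finite I" "\<And>t. (\<Sum>i\<in>I. sc (t ^ e i) (f i)) \<in> Sp n"
  shows "(\<Sum>i\<in>{i\<in>I. e i = k}. f i) \<in> Sp n"
  by (rule RS.extract_coeff[OF Sp_subspace _ assms]) (metis of_nat_eq_0_iff nat.distinct(1))

lemma sum_01: "(\<Sum>x\<in>{0,1::nat}. g x) = g 0 + g 1"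
  by simp

lemma sum_012: "(\<Sum>x\<in>{0,1,2::nat}. g x) = g 0 + g 1 + g 2"
  by (simp add: add.assoc)

lemma D_in:
  fixes G B :: "'a::field_char_0 R"
  assumes G: "nc0 G" and B: "nc0 B"
  shows "(\<Sum>i<n. G ^ i * B * G ^ (n - 1 - i)) \<in> Sp n"
proof -
  define f where "f x = (if x = (0::nat) then G else B)" for x
  define X where "X = {0, 1::nat}"
  define F where "F xs = prod_list (map f xs)" for xs
  define mk where "mk i = map (\<lambda>q. if q = i then 1 else 0::nat) [0..<n]" for i
  have fX: "finite X" by (simp add: X_def)
  have "(\<Sum>xs\<in>LL n X. sc (t ^ cnt 1 xs) (F xs)) \<in> Sp n" for t
  proof -
    have "G + sc t B = (\<Sum>x\<in>X. sc (if x = 1 then t else 1) (f x))"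
      by (simp add: X_def f_def)
    moreover have "nc0 (G + sc t B)" using G B by (simp add: nc0_add nc0_sc)
    ultimately have "(\<Sum>x\<in>X. sc (if x = 1 then t else 1) (f x)) ^ n \<in> Sp n"
      by (metis pow_in_Sp)
    then show ?thesis
      by (simp add: expand_pow[OF fX] prod_list_ind F_def)
  qed
  then have *: "(\<Sum>xs\<in>{xs\<in>LL n X. cnt 1 xs = 1}. F xs) \<in> Sp n"
    by (rule extract_R[OF LL_finite[OF fX]])
  have mk_nth: "q < n \<Longrightarrow> mk i ! q = (if q = i then 1 else 0)" for i q
    by (simp add: mk_def)
  have set_eq: "{xs\<in>LL n X. cnt 1 xs = 1} = mk ` {..<n}"
  proof
    show "{xs\<in>LL n X. cnt 1 xs = 1} \<subseteq> mk ` {..<n}"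
      using pos1 by (fastforce simp: LL_def X_def mk_def)
    show "mk ` {..<n} \<subseteq> {xs\<in>LL n X. cnt 1 xs = 1}"
    proof
      fix xs assume "xs \<in> mk ` {..<n}"
      then obtain i where i: "i < n" "xs = mk i" by auto
      have "{q. q < length xs \<and> xs ! q = 1} = {i}"
        using i by (auto simp: mk_def split: if_splits)
      then have "cnt 1 xs = 1" by (simp add: cnt_card)
      moreover have "xs \<in> LL n X" using i by (auto simp: LL_def X_def mk_def)
      ultimately show "xs \<in> {xs\<in>LL n X. cnt 1 xs = 1}" by simp
    qed
  qed
  have inj: "inj_on mk {..<n}"
  proof (rule inj_onI)
    fix i j assume "i \<in> {..<n}" "j \<in> {..<n}" "mk i = mk j"
    then have "mk i ! i = mk j ! i" by simp
    then show "i = j" using \<open>i \<in> {..<n}\<close> by (simp add: mk_nth split: if_splits)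
  qed
  have Fmk: "F (mk i) = G ^ i * B * G ^ (n - 1 - i)" if "i < n" for i
  proof -
    let ?h = "\<lambda>q. if q = i then B else G"
    have "F (mk i) = prod_list (map ?h [0..<n])"
      unfolding F_def mk_def map_map by (rule arg_cong[where f=prod_list]) (auto simp: f_def)
    also have "\<dots> = prod_list (map ?h [0..<i]) * B * prod_list (map ?h [Suc i..<n])"
      using prod_list_split[OF that, where h = ?h] by simp
    also have "prod_list (map ?h [0..<i]) = G ^ (\<Sum>q\<in>{0..<i}. 1)"
      by (rule prod_list_powG) auto
    also have "prod_list (map ?h [Suc i..<n]) = G ^ (\<Sum>q\<in>{Suc i..<n}. 1)"
      by (rule prod_list_powG) auto
    finally show ?thesis by simp
  qed
  have "(\<Sum>xs\<in>{xs\<in>LL n X. cnt 1 xs = 1}. F xs) = (\<Sum>i<n. G ^ i * B * G ^ (n - 1 - i))"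
    unfolding set_eq by (simp add: sum.reindex[OF inj] Fmk)
  then show ?thesis using * by simp
qed

lemma prod_list_mult_map: "prod_list (map (\<lambda>x. u x * v x) xs) = prod_list (map u xs) * prod_list (map v xs :: 'c::comm_monoid_mult list)"
  by (induction xs) (auto simp: ac_simps)

lemma of_nat_mult_sc: "(of_nat k :: 'a::field R) * P = sc (of_nat k) P"
  by (induction k) (auto simp: distrib_right sc_add_left)

lemma sum_k: "(\<Sum>q\<in>{a..<b}. if q = j then 2 else 1::nat) = (b - a) + (if a \<le> j \<and> j < b then 1 else 0)"
proof -
  have "(\<Sum>q\<in>{a..<b}. if q = j then 2 else 1::nat) = (\<Sum>q\<in>{a..<b}. 1 + (if q = j then 1 else 0))"
    by (rule sum.cong) auto
  also have "\<dots> = (\<Sum>q\<in>{a..<b}. 1) + (\<Sum>q\<in>{a..<b}. if q = j then 1 else 0)"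
    by (rule sum.distrib)
  also have "(\<Sum>q\<in>{a..<b}. if q = j then 1 else 0) = (if j \<in> {a..<b} then 1 else (0::nat))"
    using sum.delta[of "{a..<b}" j "\<lambda>_. 1::nat"] by simp
  finally show ?thesis by simp
qed

lemma C_raw:
  fixes G A :: "'a::field_char_0 R"
  assumes G: "nc0 G" and A: "nc0 A"
  shows "(\<Sum>p\<in>{(i,j). i<n \<and> j<n \<and> i\<noteq>j}.
      G ^ (fst p + (if snd p < fst p then 1 else 0)) * A *
      G ^ (n - 1 - fst p + (if fst p < snd p then 1 else 0))) \<in> Sp n"
proof -
  define f where "f x = (if x = (0::nat) then G else if x = 1 then A else G * G)" for x
  define X where "X = {0, 1, 2::nat}"
  define F where "F xs = prod_list (map f xs)" for xs
  define mk where "mk p = map (\<lambda>q. if q = fst p then 1 else if q = snd p then 2 else 0::nat) [0..<n]" for p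
  define Pairs where "Pairs = {(i,j). i<n \<and> j<n \<and> i\<noteq>j}"
  have fX: "finite X" by (simp add: X_def)
  have fin1: "finite {xs\<in>LL n X. cnt 1 xs = 1}" using LL_finite[OF fX] by simp
  have "(\<Sum>xs\<in>LL n X. sc (s ^ cnt 1 xs) (sc (t ^ cnt 2 xs) (F xs))) \<in> Sp n" for s t
  proof -
    let ?w = "\<lambda>x. (if x = 1 then s else 1) * (if x = 2 then t else 1)"
    have "G + sc s A + sc t (G * G) = (\<Sum>x\<in>X. sc (?w x) (f x))"
      by (simp add: X_def f_def add.assoc)
    moreover have "nc0 (G + sc s A + sc t (G * G))" using G A by (simp add: nc0_add nc0_sc nc0_times)
    ultimately have "(\<Sum>x\<in>X. sc (?w x) (f x)) ^ n \<in> Sp n"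
      by (metis pow_in_Sp)
    then show ?thesis
      by (simp add: expand_pow[OF fX] prod_list_ind F_def prod_list_mult_map mult.commute)
  qed
  then have "(\<Sum>xs\<in>{xs\<in>LL n X. cnt 1 xs = 1}. sc (t ^ cnt 2 xs) (F xs)) \<in> Sp n" for t
    by (rule extract_R[OF LL_finite[OF fX]])
  then have *: "(\<Sum>xs\<in>{xs\<in>{xs\<in>LL n X. cnt 1 xs = 1}. cnt 2 xs = 1}. F xs) \<in> Sp n"
    by (rule extract_R[OF fin1])
  have mk_nth: "q < n \<Longrightarrow> mk p ! q = (if q = fst p then 1 else if q = snd p then 2 else 0)" for p q
    by (simp add: mk_def)
  have set_eq: "{xs\<in>{xs\<in>LL n X. cnt 1 xs = 1}. cnt 2 xs = 1} = mk ` Pairs"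
  proof
    show "{xs\<in>{xs\<in>LL n X. cnt 1 xs = 1}. cnt 2 xs = 1} \<subseteq> mk ` Pairs"
    proof
      fix xs assume "xs \<in> {xs\<in>{xs\<in>LL n X. cnt 1 xs = 1}. cnt 2 xs = 1}"
      then have "set xs \<subseteq> {0,1,2}" "cnt 1 xs = 1" "cnt 2 xs = 1" "length xs = n"
        by (auto simp: LL_def X_def)
      then obtain i j where "i < n" "j < n" "i \<noteq> j"
        "xs = map (\<lambda>q. if q = i then 1 else if q = j then 2 else 0) [0..<n]"
        using pos2[of xs] by auto
      then show "xs \<in> mk ` Pairs"
        unfolding Pairs_def mk_def by (intro image_eqI[of _ _ "(i,j)"]) auto
    qed
    show "mk ` Pairs \<subseteq> {xs\<in>{xs\<in>LL n X. cnt 1 xs = 1}. cnt 2 xs = 1}"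
    proof
      fix xs assume "xs \<in> mk ` Pairs"
      then obtain i j where ij: "i < n" "j < n" "i \<noteq> j" "xs = mk (i,j)"
        by (auto simp: Pairs_def)
      have "{q. q < length xs \<and> xs ! q = 1} = {i}"
        using ij by (auto simp: mk_def split: if_splits)
      then have "cnt 1 xs = 1" by (simp add: cnt_card)
      moreover have "{q. q < length xs \<and> xs ! q = 2} = {j}"
        using ij by (auto simp: mk_def split: if_splits)
      then have "cnt 2 xs = 1" by (simp add: cnt_card)
      moreover have "xs \<in> LL n X" using ij by (auto simp: LL_def X_def mk_def)
      ultimately show "xs \<in> {xs\<in>{xs\<in>LL n X. cnt 1 xs = 1}. cnt 2 xs = 1}" by simp
    qed
  qed
  have inj: "inj_on mk Pairs"
  proof (rule inj_onI)
    fix p p' assume p: "p \<in> Pairs" "p' \<in> Pairs" "mk p = mk p'"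
    then have "mk p ! fst p = mk p' ! fst p" "mk p ! snd p = mk p' ! snd p" by simp_all
    then show "p = p'" using p(1,2) unfolding Pairs_def
      by (auto simp: mk_nth split: if_splits prod.splits)
  qed
  have Fmk: "F (mk p) = G ^ (fst p + (if snd p < fst p then 1 else 0)) * A *
      G ^ (n - 1 - fst p + (if fst p < snd p then 1 else 0))" if "p \<in> Pairs" for p
  proof -
    obtain i j where p0: "p = (i,j)" by (cases p)
    then have p: "p = (i,j)" "i < n" "j < n" "i \<noteq> j" using that by (auto simp: Pairs_def)
    let ?h = "\<lambda>q. if q = i then A else if q = j then G * G else G"
    have "F (mk p) = prod_list (map ?h [0..<n])"
      unfolding F_def mk_def map_map p by (rule arg_cong[where f=prod_list]) (auto simp: f_def)
    also have "\<dots> = prod_list (map ?h [0..<i]) * A * prod_list (map ?h [Suc i..<n])"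
      using prod_list_split[OF p(2), where h = ?h] by simp
    also have "prod_list (map ?h [0..<i]) = G ^ (\<Sum>q\<in>{0..<i}. if q = j then 2 else 1)"
      by (rule prod_list_powG) (auto simp: power2_eq_square)
    also have "prod_list (map ?h [Suc i..<n]) = G ^ (\<Sum>q\<in>{Suc i..<n}. if q = j then 2 else 1)"
      by (rule prod_list_powG) (auto simp: power2_eq_square)
    finally show ?thesis using p by (simp add: sum_k)
  qed
  have "(\<Sum>xs\<in>{xs\<in>{xs\<in>LL n X. cnt 1 xs = 1}. cnt 2 xs = 1}. F xs) =
    (\<Sum>p\<in>Pairs. G ^ (fst p + (if snd p < fst p then 1 else 0)) * A *
      G ^ (n - 1 - fst p + (if fst p < snd p then 1 else 0)))"
    unfolding set_eq by (simp add: sum.reindex[OF inj] Fmk)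
  then show ?thesis using * by (simp add: Pairs_def)
qed

definition Ins :: "nat \<Rightarrow> 'a::field R \<Rightarrow> 'a R \<Rightarrow> (nat \<Rightarrow> 'a) \<Rightarrow> 'a R" where
  "Ins n G A \<alpha> = (\<Sum>p\<le>n. sc (\<alpha> p) (G ^ p * A * G ^ (n - p)))"

lemma Ins_lin: "sc c1 (Ins n G A \<alpha>1) + sc c2 (Ins n G A \<alpha>2) = Ins n G A (\<lambda>p. c1 * \<alpha>1 p + c2 * \<alpha>2 p)"
  by (simp add: Ins_def sc_sum sum.distrib[symmetric] sc_add_left)

lemma Ins_cong: "(\<And>p. p \<le> n \<Longrightarrow> \<alpha> p = \<beta> p) \<Longrightarrow> Ins n G A \<alpha> = Ins n G A \<beta>"
  by (simp add: Ins_def)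

lemma Ins_delta: "k \<le> n \<Longrightarrow> Ins n G A (\<lambda>p. if p = k then 1 else 0) = G ^ k * A * G ^ (n - k)"
proof -
  assume k: "k \<le> n"
  have "Ins n G A (\<lambda>p. if p = k then 1 else 0) = (\<Sum>p\<le>n. if p = k then G ^ p * A * G ^ (n - p) else 0)"
    unfolding Ins_def by (rule sum.cong) auto
  also have "\<dots> = G ^ k * A * G ^ (n - k)" using k by (simp add: sum.delta')
  finally show ?thesis .
qed

lemma C_form:
  fixes G A :: "'a::field R"
  shows "(\<Sum>p\<in>{(i,j). i<n \<and> j<n \<and> i\<noteq>j}.
      G ^ (fst p + (if snd p < fst p then 1 else 0)) * A *
      G ^ (n - 1 - fst p + (if fst p < snd p then 1 else 0))) =
    Ins n G A (\<lambda>p. of_nat (n - 1 - p) + of_nat (p - 1))"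
proof -
  let ?E = "\<lambda>p. G ^ p * A * G ^ (n - p)"
  let ?T = "\<lambda>p. G ^ (fst p + (if snd p < fst p then 1 else 0)) * A *
      G ^ (n - 1 - fst p + (if fst p < snd p then 1 else 0))"
  have "{(i,j). i<n \<and> j<n \<and> i\<noteq>j} = Sigma {..<n} (\<lambda>i. {..<n} - {i})" by auto
  then have "(\<Sum>p\<in>{(i,j). i<n \<and> j<n \<and> i\<noteq>j}. ?T p) = (\<Sum>p\<in>Sigma {..<n} (\<lambda>i. {..<n} - {i}). ?T p)"
    by (simp only:)
  also have "\<dots> = (\<Sum>i<n. \<Sum>j\<in>{..<n} - {i}. ?T (i,j))"
    by (subst sum.Sigma) (auto simp: split_def)
  also have "\<dots> = (\<Sum>i<n. sc (of_nat i) (?E (Suc i)) + sc (of_nat (n - 1 - i)) (?E i))"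
  proof (rule sum.cong)
    fix i assume "i \<in> {..<n}"
    then have i: "i < n" by simp
    have seq: "{..<n} - {i} = {..<i} \<union> {Suc i..<n}" using i by auto
    have "(\<Sum>j\<in>{..<n} - {i}. ?T (i,j)) = (\<Sum>j\<in>{..<i} \<union> {Suc i..<n}. ?T (i,j))"
      by (simp only: seq)
    also have "\<dots> = (\<Sum>j<i. ?T (i,j)) + (\<Sum>j\<in>{Suc i..<n}. ?T (i,j))"
      by (rule sum.union_disjoint) auto
    also have "(\<Sum>j<i. ?T (i,j)) = (\<Sum>j<i. ?E (Suc i))"
      by (rule sum.cong) auto
    also have "(\<Sum>j\<in>{Suc i..<n}. ?T (i,j)) = (\<Sum>j\<in>{Suc i..<n}. ?E i)"
      by (rule sum.cong) (use i in \<open>auto simp: Suc_diff_Suc\<close>)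
    finally show "(\<Sum>j\<in>{..<n} - {i}. ?T (i,j)) = sc (of_nat i) (?E (Suc i)) + sc (of_nat (n - 1 - i)) (?E i)"
      by (simp add: of_nat_mult_sc)
  qed simp
  also have "\<dots> = (\<Sum>i<n. sc (of_nat i) (?E (Suc i))) + (\<Sum>i<n. sc (of_nat (n - 1 - i)) (?E i))"
    by (simp add: sum.distrib)
  also have "(\<Sum>i<n. sc (of_nat i) (?E (Suc i))) = (\<Sum>p\<le>n. sc (of_nat (p - 1)) (?E p))"
    by (simp add: sum.atMost_shift)
  also have "(\<Sum>i<n. sc (of_nat (n - 1 - i)) (?E i)) = (\<Sum>p\<le>n. sc (of_nat (n - 1 - p)) (?E p))"
    by (simp add: lessThan_Suc_atMost[symmetric])
  also have "(\<Sum>p\<le>n. sc (of_nat (p - 1)) (?E p)) + (\<Sum>p\<le>n. sc (of_nat (n - 1 - p)) (?E p)) =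
      Ins n G A (\<lambda>p. of_nat (n - 1 - p) + of_nat (p - 1))"
    by (simp add: Ins_def sum.distrib[symmetric] sc_add_left add.commute)
  finally show ?thesis .
qed

lemma D_AG: "(\<Sum>i<n. G ^ i * (A * G) * G ^ (n - 1 - i)) = Ins n G A (\<lambda>p. if p < n then 1 else 0)"
proof -
  have "(\<Sum>i<n. G ^ i * (A * G) * G ^ (n - 1 - i)) = (\<Sum>i<n. G ^ i * A * G ^ (n - i))"
  proof (rule sum.cong)
    fix i assume "i \<in> {..<n}"
    then have "n - i = Suc (n - 1 - i)" by auto
    then show "G ^ i * (A * G) * G ^ (n - 1 - i) = G ^ i * A * G ^ (n - i)"
      by (simp add: mult.assoc)
  qed simp
  also have "\<dots> = (\<Sum>p\<le>n. if p < n then G ^ p * A * G ^ (n - p) else 0)"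
    by (simp add: lessThan_Suc_atMost[symmetric])
  also have "\<dots> = Ins n G A (\<lambda>p. if p < n then 1 else 0)"
    unfolding Ins_def by (rule sum.cong) auto
  finally show ?thesis .
qed

lemma D_GA: "(\<Sum>i<n. G ^ i * (G * A) * G ^ (n - 1 - i)) = Ins n G A (\<lambda>p. if 1 \<le> p then 1 else 0)"
proof -
  have "(\<Sum>i<n. G ^ i * (G * A) * G ^ (n - 1 - i)) = (\<Sum>i<n. G ^ Suc i * A * G ^ (n - Suc i))"
  proof (rule sum.cong)
    fix i assume "i \<in> {..<n}"
    have "G ^ i * (G * A) = G ^ Suc i * A" by (metis mult.assoc power_Suc2)
    then show "G ^ i * (G * A) * G ^ (n - 1 - i) = G ^ Suc i * A * G ^ (n - Suc i)" by simp
  qed simp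
  also have "\<dots> = (\<Sum>p\<le>n. if 1 \<le> p then G ^ p * A * G ^ (n - p) else 0)"
    by (simp add: sum.atMost_shift)
  also have "\<dots> = Ins n G A (\<lambda>p. if 1 \<le> p then 1 else 0)"
    unfolding Ins_def by (rule sum.cong) auto
  finally show ?thesis .
qed

lemma coeff_calc:
  assumes "1 \<le> n" "p \<le> n"
  shows "(1 / of_nat n) * (of_nat (n - 1 - p) + of_nat (p - 1)) + (1 / of_nat n) * (if p < n then 1 else 0)
     + (- (of_nat n - 1) / of_nat n) * (if 1 \<le> p then 1 else 0) = (if p = 0 then 1 else (0::'a::field_char_0))"
proof -
  have n0: "(of_nat n :: 'a) \<noteq> 0" using assms by simp
  consider "p = 0" | "p = n" "p \<noteq> 0" | "0 < p" "p < n" using assms by linarith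
  then show ?thesis
  proof cases
    case 1
    then show ?thesis using assms n0 by (simp add: of_nat_diff field_simps)
  next
    case 2
    then show ?thesis using assms n0 by (simp add: of_nat_diff field_simps)
  next
    case 3
    then have "of_nat (n - 1 - p) + of_nat (p - 1) = (of_nat n - 2 :: 'a)"
      by (simp add: of_nat_diff)
    then show ?thesis using 3 assms n0 by (simp add: field_simps)
  qed
qed

lemma core:
  fixes G A :: "'a::field_char_0 R"
  assumes G: "nc0 G" and A: "nc0 A" and n: "1 \<le> n"
  shows "A * G ^ n \<in> Sp n" "G ^ n * A \<in> Sp n"
proof -
  let ?I = "Ins n G A"
  have C: "?I (\<lambda>p. of_nat (n - 1 - p) + of_nat (p - 1)) \<in> Sp n"
    using C_raw[OF G A, of n] unfolding C_form .
  have DB: "?I (\<lambda>p. if p < n then 1 else 0) \<in> Sp n"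
    using D_in[OF G nc0_times(1)[OF A, of G], where n=n] unfolding D_AG .
  have DA: "?I (\<lambda>p. if 1 \<le> p then 1 else 0) \<in> Sp n"
    using D_in[OF G nc0_times(1)[OF G, of A], where n=n] unfolding D_GA .
  have "sc (1 / of_nat n) (?I (\<lambda>p. of_nat (n - 1 - p) + of_nat (p - 1))) + sc (1 / of_nat n) (?I (\<lambda>p. if p < n then 1 else 0))
      + sc (- (of_nat n - 1) / of_nat n) (?I (\<lambda>p. if 1 \<le> p then 1 else 0)) \<in> Sp n"
    using C DB DA Sp_subspace by (intro RS.subspace_add RS.subspace_scale) auto
  also have "sc (1 / of_nat n) (?I (\<lambda>p. of_nat (n - 1 - p) + of_nat (p - 1))) + sc (1 / of_nat n) (?I (\<lambda>p. if p < n then 1 else 0))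
      + sc (- (of_nat n - 1) / of_nat n) (?I (\<lambda>p. if 1 \<le> p then 1 else 0)) = ?I (\<lambda>p. if p = 0 then 1 else 0)"
  proof -
    let ?a = "1 / (of_nat n::'a)" and ?c = "- (of_nat n - 1) / (of_nat n::'a)"
    let ?\<alpha> = "\<lambda>p. of_nat (n - 1 - p) + of_nat (p - 1) :: 'a"
    let ?\<beta> = "\<lambda>p. if p < n then 1 else 0 :: 'a"
    let ?\<gamma> = "\<lambda>p. if 1 \<le> p then 1 else 0 :: 'a"
    have "sc ?a (?I ?\<alpha>) + sc ?a (?I ?\<beta>) + sc ?c (?I ?\<gamma>) = sc 1 (?I (\<lambda>p. ?a * ?\<alpha> p + ?a * ?\<beta> p)) + sc ?c (?I ?\<gamma>)"
      by (simp only: Ins_lin sc_one)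
    also have "\<dots> = ?I (\<lambda>p. 1 * (?a * ?\<alpha> p + ?a * ?\<beta> p) + ?c * ?\<gamma> p)"
      by (rule Ins_lin)
    also have "\<dots> = ?I (\<lambda>p. if p = 0 then 1 else 0)"
    proof (rule Ins_cong)
      fix p assume "p \<le> n"
      show "1 * (?a * ?\<alpha> p + ?a * ?\<beta> p) + ?c * ?\<gamma> p = (if p = 0 then 1 else 0)"
        using coeff_calc[OF n \<open>p \<le> n\<close>] by (simp only: mult.left_neutral)
    qed
    finally show ?thesis .
  qed
  also have "\<dots> = A * G ^ n" by (simp add: Ins_delta)
  finally show 1: "A * G ^ n \<in> Sp n" .
  have "?I (\<lambda>p. if p < n then 1 else 0) - ?I (\<lambda>p. if 1 \<le> p then 1 else 0) =
      sc 1 (?I (\<lambda>p. if p < n then 1 else 0)) + sc (-1) (?I (\<lambda>p. if 1 \<le> p then 1 else 0))"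
    by (simp add: RS.scale_minus_left)
  also have "\<dots> = ?I (\<lambda>p. (if p = 0 then 1 else 0) - (if p = n then 1 else 0))"
    by (simp only: Ins_lin, rule Ins_cong) (use n in auto)
  also have "\<dots> = sc 1 (?I (\<lambda>p. if p = 0 then 1 else 0)) + sc (-1) (?I (\<lambda>p. if p = n then 1 else 0))"
    by (simp only: Ins_lin) (rule Ins_cong, simp)
  also have "\<dots> = A * G ^ n - G ^ n * A"
    by (simp add: Ins_delta RS.scale_minus_left)
  finally have "G ^ n * A = A * G ^ n - (?I (\<lambda>p. if p < n then 1 else 0) - ?I (\<lambda>p. if 1 \<le> p then 1 else 0))"
    by simp
  then show "G ^ n * A \<in> Sp n"
    using 1 DB DA Sp_subspace by (metis RS.subspace_diff)
qed

lemma Sp_mult_left: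
  fixes A :: "'a::field_char_0 R"
  assumes A: "nc0 A" and n: "1 \<le> n" and P: "P \<in> Sp n"
  shows "A * P \<in> Sp n"
  using P unfolding Sp_def
proof (induction rule: RS.span_induct_alt)
  case base
  then show ?case by (simp add: RS.span_zero)
next
  case (step c x y)
  then obtain H where H: "x = H ^ n" "nc0 H" by (auto simp: Pw_def)
  have "A * x \<in> RS.span (Pw n)" using core(1)[OF H(2) A n] H(1) by (simp add: Sp_def)
  then have "sc c (A * x) + A * y \<in> RS.span (Pw n)"
    using step by (intro RS.span_add RS.span_scale)
  then show ?case by (simp add: distrib_left sc_mult_right)
qed

lemma Sp_mult_right:
  fixes A :: "'a::field_char_0 R"
  assumes A: "nc0 A" and n: "1 \<le> n" and P: "P \<in> Sp n"
  shows "P * A \<in> Sp n"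
  using P unfolding Sp_def
proof (induction rule: RS.span_induct_alt)
  case base
  then show ?case by (simp add: RS.span_zero)
next
  case (step c x y)
  then obtain H where H: "x = H ^ n" "nc0 H" by (auto simp: Pw_def)
  have "x * A \<in> RS.span (Pw n)" using core(2)[OF H(2) A n] H(1) by (simp add: Sp_def)
  then have "sc c (x * A) + y * A \<in> RS.span (Pw n)"
    using step by (intro RS.span_add RS.span_scale)
  then show ?case by (simp add: distrib_right sc_mult_left)
qed

lemma Sp_subst:
  fixes P :: "'a::field R"
  assumes \<sigma>: "\<And>i. nc0 (\<sigma> i)" and P: "P \<in> Sp n"
  shows "Subst \<sigma> P \<in> Sp n"
  using P unfolding Sp_def
proof (induction rule: RS.span_induct_alt)
  case base
  then show ?case by (simp add: RS.span_zero)
next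
  case (step c x y)
  then obtain H where H: "x = H ^ n" "nc0 H" by (auto simp: Pw_def)
  have "Subst \<sigma> x \<in> RS.span (Pw n)"
    using H Subst_nc0[OF \<sigma> H(2)] by (auto simp: Subst_power Pw_def intro!: RS.span_base)
  then have "sc c (Subst \<sigma> x) + Subst \<sigma> y \<in> RS.span (Pw n)"
    using step by (intro RS.span_add RS.span_scale)
  then show ?case by (simp add: Subst_add Subst_sc)
qed

lemma Sp_nc0: "P \<in> Sp n \<Longrightarrow> 1 \<le> n \<Longrightarrow> nc0 P"
  unfolding Sp_def by (erule nc0_span) (auto simp: Pw_def intro: nc0_power)

lemma T_ideal_Sp:
  assumes n: "1 \<le> n"
  shows "p \<in> T_ideal (x_pow n :: 'a::field_char_0 ncpoly) \<Longrightarrow> \<exists>P. p = lk P \<and> P \<in> Sp n"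
proof (induction rule: T_ideal.induct)
  case gen
  have "nc0 (Poly_Mapping.single [0] (1::'a))" by (simp add: nc0_def lookup_single)
  then show ?case using x_pow_lk pow_in_Sp by blast
next
  case zero
  then show ?case using zero_lk RS.span_zero Sp_def by metis
next
  case (add p q)
  then obtain P Q where "p = lk P" "P \<in> Sp n" "q = lk Q" "Q \<in> Sp n" by blast
  then show ?case using nc_add_lk Sp_subspace RS.subspace_add by metis
next
  case (scale p c)
  then obtain P where "p = lk P" "P \<in> Sp n" by blast
  then show ?case using nc_scale_lk Sp_subspace RS.subspace_scale by metis
next
  case (mult_left p a)
  then obtain P where P: "p = lk P" "P \<in> Sp n" by blast
  obtain A where A: "a = lk A" "nc0 A" using fpoly_ex[OF mult_left.hyps(2)] by blast
  show ?case using Sp_mult_left[OF A(2) n P(2)] P A nc_mult_lk by metis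
next
  case (mult_right p a)
  then obtain P where P: "p = lk P" "P \<in> Sp n" by blast
  obtain A where A: "a = lk A" "nc0 A" using fpoly_ex[OF mult_right.hyps(2)] by blast
  show ?case using Sp_mult_right[OF A(2) n P(2)] P A nc_mult_lk by metis
next
  case (endo p \<sigma>)
  then obtain P where P: "p = lk P" "P \<in> Sp n" by blast
  define \<sigma>R where "\<sigma>R i = (SOME S. \<sigma> i = lk S \<and> nc0 S)" for i
  have \<sigma>R: "\<sigma> i = lk (\<sigma>R i) \<and> nc0 (\<sigma>R i)" for i
    unfolding \<sigma>R_def by (rule someI_ex) (rule fpoly_ex[OF endo.hyps(2)])
  have "nc_subst \<sigma> p = lk (Subst \<sigma>R P)"
    using nc_subst_lk[of \<sigma> \<sigma>R P] \<sigma>R P Sp_nc0[OF P(2) n] by auto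
  moreover have "Subst \<sigma>R P \<in> Sp n" using Sp_subst[OF _ P(2)] \<sigma>R by blast
  ultimately show ?case by blast
qed

lemma fsum_apply: "(sum f A) x = (\<Sum>a\<in>A. f a x)"
  by (induction A rule: infinite_finite_induct) auto

interpretation nc: vector_space "nc_scale :: 'a::field \<Rightarrow> 'a ncpoly \<Rightarrow> 'a ncpoly"
  by standard (auto simp: nc_scale_def fun_eq_iff algebra_simps)

fun splits :: "nat \<Rightarrow> 'b list \<Rightarrow> 'b list list set" where
  "splits 0 w = (if w = [] then {[]} else {})"
| "splits (Suc n) w = (\<Union>i\<in>{..length w}. (\<lambda>bs. take i w # bs) ` splits n (drop i w))"

lemma splits_char: "bs \<in> splits n w \<longleftrightarrow> length bs = n \<and> concat bs = w"
proof (induction n arbitrary: w bs)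
  case 0
  then show ?case by auto
next
  case (Suc n)
  show ?case
  proof
    assume "bs \<in> splits (Suc n) w"
    then obtain i bs' where "i \<le> length w" "bs' \<in> splits n (drop i w)" "bs = take i w # bs'" by auto
    then show "length bs = Suc n \<and> concat bs = w" using Suc.IH by auto
  next
    assume a: "length bs = Suc n \<and> concat bs = w"
    then obtain u bs' where bs: "bs = u # bs'" by (cases bs) auto
    let ?i = "length u"
    have "?i \<le> length w" "take ?i w = u" "drop ?i w = concat bs'" using a bs by auto
    moreover have "bs' \<in> splits n (drop ?i w)" using Suc.IH a bs \<open>drop ?i w = concat bs'\<close> by auto
    ultimately show "bs \<in> splits (Suc n) w" using bs by force
  qed
qed

lemma finite_splits: "finite (splits n w)"
  by (induction n arbitrary: w) auto

lemma lk_pow: "lk (H ^ n) w = (\<Sum>bs\<in>splits n w. prod_list (map (lk H) bs))"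
proof (induction n arbitrary: w)
  case 0
  then show ?case by (simp add: lookup_one zero_list_def when_def)
next
  case (Suc n)
  have "lk (H ^ Suc n) w = (\<Sum>i\<le>length w. lk H (take i w) * lk (H ^ n) (drop i w))"
    by (simp add: lookup_times)
  also have "\<dots> = (\<Sum>i\<le>length w. \<Sum>bs\<in>splits n (drop i w). prod_list (map (lk H) (take i w # bs)))"
    by (simp add: Suc sum_distrib_left)
  also have "\<dots> = (\<Sum>i\<le>length w. \<Sum>bs\<in>(\<lambda>bs. take i w # bs) ` splits n (drop i w). prod_list (map (lk H) bs))"
    by (subst sum.reindex) (auto simp: inj_on_def)
  also have "\<dots> = (\<Sum>bs\<in>splits (Suc n) w. prod_list (map (lk H) bs))"
    unfolding splits.simps
  proof (rule sum.UNION_disjoint[symmetric])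
    show "\<forall>i\<in>{..length w}. \<forall>j\<in>{..length w}. i \<noteq> j \<longrightarrow>
      (\<lambda>bs. take i w # bs) ` splits n (drop i w) \<inter> (\<lambda>bs. take j w # bs) ` splits n (drop j w) = {}"
      by (auto simp: min_def split: if_splits) (metis length_take min.absorb2)+
  qed (auto simp: finite_splits)
  finally show ?case .
qed

definition Perm :: "nat \<Rightarrow> nat list set" where
  "Perm m = {w. distinct w \<and> set w = {0..<m}}"

definition proj :: "nat \<Rightarrow> 'a::field R \<Rightarrow> 'a ncpoly" where
  "proj m P = (\<lambda>w. if w \<in> Perm m then lk P w else 0)"

lemma proj_V: "lk P \<in> V m \<Longrightarrow> proj m P = lk P"
  by (auto simp: proj_def V_def Perm_def fun_eq_iff)

lemma proj_add: "proj m (P + Q) = proj m P + proj m Q"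
  by (auto simp: proj_def fun_eq_iff lookup_add)
lemma proj_sc: "proj m (sc c P) = nc_scale c (proj m P)"
  by (auto simp: proj_def fun_eq_iff nc_scale_def)
lemma proj_zero: "proj m 0 = 0"
  by (auto simp: proj_def fun_eq_iff)

lemma distinct_blocks: "distinct (concat bs) \<Longrightarrow> [] \<notin> set bs \<Longrightarrow> distinct bs"
proof (induction bs)
  case (Cons u bs)
  have "u \<notin> set bs"
  proof
    assume "u \<in> set bs"
    then have "set u \<subseteq> set (concat bs)" by auto
    moreover obtain x where "x \<in> set u" using Cons.prems(2) by (cases u) auto
    ultimately show False using Cons.prems(1) by auto
  qed
  then show ?case using Cons by auto
qed simp

lemma blocks_inj:
  "concat bs1 = concat bs2 \<Longrightarrow> distinct (concat bs1) \<Longrightarrow> [] \<notin> set bs1 \<Longrightarrow> [] \<notin> set bs2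
   \<Longrightarrow> set bs1 = set bs2 \<Longrightarrow> bs1 = bs2"
proof (induction bs1 arbitrary: bs2)
  case Nil
  then show ?case by simp
next
  case (Cons u r1)
  then obtain v r2 where bs2: "bs2 = v # r2" by (cases bs2) auto
  have u0: "u \<noteq> []" and v0: "v \<noteq> []" using Cons.prems bs2 by auto
  have hd: "hd u = hd v" using Cons.prems(1) bs2 u0 v0 by (metis concat.simps(2) hd_append2)
  have "u = v"
  proof (rule ccontr)
    assume "u \<noteq> v"
    then have "u \<in> set r2" using Cons.prems(5) bs2 by auto
    then have "hd u \<in> set (concat r2)" using u0 by (auto intro: bexI[of _ u])
    moreover have "hd v \<in> set v" using v0 by simp
    moreover have "distinct (v @ concat r2)" using Cons.prems(1,2) bs2 by simp
    ultimately show False using hd by auto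
  qed
  have d1: "distinct (u # r1)" by (rule distinct_blocks) (use Cons.prems in auto)
  have d2: "distinct (v # r2)" by (rule distinct_blocks) (use Cons.prems bs2 in auto)
  have "set r1 = set r2" using Cons.prems(5) bs2 d1 d2 \<open>u = v\<close> by auto
  moreover have "concat r1 = concat r2" using Cons.prems(1) bs2 \<open>u = v\<close> by simp
  ultimately have "r1 = r2" using Cons.IH Cons.prems bs2 by auto
  then show ?case using bs2 \<open>u = v\<close> by simp
qed

definition VB :: "nat \<Rightarrow> nat \<Rightarrow> nat list list set" where
  "VB m n = {bs. length bs = n \<and> [] \<notin> set bs \<and> distinct (concat bs) \<and> set (concat bs) = {0..<m}}"

definition BS :: "nat \<Rightarrow> nat \<Rightarrow> nat list set set" where
  "BS m n = set ` VB m n"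

definition sfun :: "nat list set \<Rightarrow> 'a::field ncpoly" where
  "sfun B = (\<lambda>w. if \<exists>bs. distinct bs \<and> set bs = B \<and> concat bs = w then 1 else 0)"

definition Sgen :: "nat \<Rightarrow> nat \<Rightarrow> 'a::field ncpoly set" where
  "Sgen m n = sfun ` BS m n"

lemma finite_Perm: "finite (Perm m)"
proof -
  have "Perm m \<subseteq> {w. set w \<subseteq> {0..<m} \<and> length w = m}"
    by (auto simp: Perm_def dest: distinct_card)
  then show ?thesis by (rule finite_subset) (rule finite_lists_length_eq, simp)
qed

lemma finite_VB: "finite (VB m n)"
proof -
  have "VB m n \<subseteq> (\<Union>w\<in>Perm m. splits n w)"
    by (auto simp: VB_def Perm_def splits_char)
  then show ?thesis by (rule finite_subset) (auto simp: finite_Perm finite_splits)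
qed

lemma finite_BS: "finite (BS m n)"
  by (simp add: BS_def finite_VB)

lemma mset_concat_eq: "mset xss = mset yss \<Longrightarrow> mset (concat xss) = mset (concat yss)"
proof -
  assume a: "mset xss = mset yss"
  have "mset (concat xss) = sum_mset (image_mset mset (mset xss))"
    by (simp add: mset_concat sum_mset_sum_list[symmetric])
  also have "\<dots> = mset (concat yss)"
    by (simp add: a mset_concat sum_mset_sum_list[symmetric])
  finally show ?thesis .
qed

lemma VB_perm:
  assumes "bs \<in> VB m n" "distinct bs'" "set bs' = set bs"
  shows "concat bs' \<in> Perm m" "length bs' = n"
proof -
  have d: "distinct bs" using assms(1) by (auto simp: VB_def intro: distinct_blocks)
  then have "mset bs' = mset bs" using assms set_eq_iff_mset_eq_distinct by blast
  then have m: "mset (concat bs') = mset (concat bs)" by (rule mset_concat_eq)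
  show "concat bs' \<in> Perm m"
    using assms(1) mset_eq_imp_distinct_iff[OF m] mset_eq_setD[OF m]
    by (auto simp: VB_def Perm_def)
  show "length bs' = n" using assms d distinct_card
    by (metis (mono_tags, lifting) VB_def mem_Collect_eq)
qed

lemma gen_formula:
  fixes H :: "'a::field R"
  assumes H: "nc0 H"
  shows "proj m (H ^ n) = (\<Sum>B\<in>BS m n. nc_scale (\<Prod>u\<in>B. lk H u) (sfun B))"
proof (rule ext)
  fix w
  let ?c = "\<lambda>B. \<Prod>u\<in>B. lk H u"
  have rhs: "(\<Sum>B\<in>BS m n. nc_scale (?c B) (sfun B)) w = (\<Sum>B\<in>BS m n. ?c B * sfun B w)"
    by (simp add: fsum_apply nc_scale_def)
  show "proj m (H ^ n) w = (\<Sum>B\<in>BS m n. nc_scale (?c B) (sfun B)) w"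
  proof (cases "w \<in> Perm m")
    case False
    have sf0: "sfun B w = 0" if B: "B \<in> BS m n" for B
    proof (rule ccontr)
      assume "sfun B w \<noteq> 0"
      then obtain bs' where bs': "distinct bs'" "set bs' = B" "concat bs' = w"
        by (auto simp: sfun_def split: if_splits)
      obtain bs where "bs \<in> VB m n" "B = set bs" using B by (auto simp: BS_def)
      then have "concat bs' \<in> Perm m" using VB_perm bs' by blast
      then show False using False bs' by simp
    qed
    have "(\<Sum>B\<in>BS m n. ?c B * sfun B w) = 0" by (rule sum.neutral) (simp add: sf0)
    then show ?thesis using False by (simp add: rhs proj_def)
  next
    case True
    let ?SW = "{bs\<in>splits n w. [] \<notin> set bs}"
    have lhs: "proj m (H ^ n) w = (\<Sum>bs\<in>?SW. prod_list (map (lk H) bs))"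
    proof -
      have "proj m (H ^ n) w = (\<Sum>bs\<in>splits n w. prod_list (map (lk H) bs))"
        using True by (simp add: proj_def lk_pow)
      also have "\<dots> = (\<Sum>bs\<in>?SW. prod_list (map (lk H) bs))"
      proof (rule sum.mono_neutral_right)
        show "\<forall>bs\<in>splits n w - ?SW. prod_list (map (lk H) bs) = 0"
          using H by (auto simp: nc0_def prod_list_zero_iff)
      qed (auto simp: finite_splits)
      finally show ?thesis .
    qed
    have wd: "distinct w" "set w = {0..<m}" using True by (auto simp: Perm_def)
    have SW_d: "distinct bs" if "bs \<in> ?SW" for bs
      using that wd by (intro distinct_blocks) (auto simp: splits_char)
    have img: "{B\<in>BS m n. sfun B w = (1::'a)} = set ` ?SW"
    proof
      show "{B\<in>BS m n. sfun B w = (1::'a)} \<subseteq> set ` ?SW"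
      proof
        fix B assume B: "B \<in> {B\<in>BS m n. sfun B w = (1::'a)}"
        then obtain bs' where bs': "distinct bs'" "set bs' = B" "concat bs' = w"
          by (auto simp: sfun_def split: if_splits)
        obtain bs where bs: "bs \<in> VB m n" "B = set bs" using B by (auto simp: BS_def)
        have "length bs' = n" using VB_perm(2)[OF bs(1) bs'(1)] bs bs' by simp
        moreover have "[] \<notin> set bs'" using bs bs' by (auto simp: VB_def)
        ultimately show "B \<in> set ` ?SW" using bs' by (auto simp: splits_char)
      qed
      show "set ` ?SW \<subseteq> {B\<in>BS m n. sfun B w = (1::'a)}"
      proof
        fix B assume "B \<in> set ` ?SW"
        then obtain bs where bs: "bs \<in> ?SW" "B = set bs" by auto
        have "bs \<in> VB m n" using bs wd by (auto simp: VB_def splits_char)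
        moreover have "sfun B w = (1::'a)" using bs SW_d[OF bs(1)] by (auto simp: sfun_def splits_char)
        ultimately show "B \<in> {B\<in>BS m n. sfun B w = (1::'a)}" using bs by (auto simp: BS_def)
      qed
    qed
    have inj: "inj_on set ?SW"
    proof (rule inj_onI)
      fix bs1 bs2 assume "bs1 \<in> ?SW" "bs2 \<in> ?SW" "set bs1 = set bs2"
      then show "bs1 = bs2" using wd by (intro blocks_inj) (auto simp: splits_char)
    qed
    have "(\<Sum>B\<in>BS m n. ?c B * sfun B w) = (\<Sum>B\<in>{B\<in>BS m n. sfun B w = (1::'a)}. ?c B)"
      by (rule sum.mono_neutral_cong_right) (auto simp: finite_BS sfun_def)
    also have "\<dots> = (\<Sum>bs\<in>?SW. ?c (set bs))"
      unfolding img by (rule sum.reindex[OF inj, unfolded comp_def])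
    also have "\<dots> = (\<Sum>bs\<in>?SW. prod_list (map (lk H) bs))"
      by (rule sum.cong) (auto simp: prod.distinct_set_conv_list SW_d)
    finally show ?thesis using lhs rhs by simp
  qed
qed

lemma gen_in_span:
  fixes H :: "'a::field R"
  assumes H: "nc0 H"
  shows "proj m (H ^ n) \<in> nc.span (Sgen m n)"
  unfolding gen_formula[OF H] Sgen_def
  by (intro nc.span_sum nc.span_scale nc.span_base) auto

lemma Sp_proj:
  fixes P :: "'a::field R"
  assumes "P \<in> Sp n"
  shows "proj m P \<in> nc.span (Sgen m n)"
  using assms unfolding Sp_def
proof (induction rule: RS.span_induct_alt)
  case base
  then show ?case by (metis proj_zero nc.span_zero)
next
  case (step c x y)
  then obtain H where H: "x = H ^ n" "nc0 H" by (auto simp: Pw_def)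
  have "proj m (sc c x + y) = nc_scale c (proj m x) + proj m y" by (simp only: proj_add proj_sc)
  then show ?case using step gen_in_span[OF H(2)] H(1)
    by (metis nc.span_add nc.span_scale)
qed

definition mn :: "nat list \<Rightarrow> nat" where "mn u = Min (set u)"

definition NB :: "nat \<Rightarrow> nat \<Rightarrow> nat list list set" where
  "NB m n = {bs \<in> VB m n. sorted (map mn bs)}"

lemma finite_NB: "finite (NB m n)"
  by (rule finite_subset[OF _ finite_VB[of m n]]) (auto simp: NB_def)

lemma BS_NB: "BS m n \<subseteq> set ` NB m n"
proof
  fix B assume "B \<in> BS m n"
  then obtain bs where bs: "bs \<in> VB m n" "B = set bs" by (auto simp: BS_def)
  let ?bs = "sort_key mn bs"
  have m: "mset ?bs = mset bs" by simp
  have mc: "mset (concat ?bs) = mset (concat bs)" by (rule mset_concat_eq[OF m])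
  have "?bs \<in> VB m n"
    using bs(1) mset_eq_imp_distinct_iff[OF mc] mset_eq_setD[OF mc]
    by (auto simp: VB_def)
  then have "?bs \<in> NB m n" by (simp add: NB_def)
  moreover have "set ?bs = B" using bs by simp
  ultimately show "B \<in> set ` NB m n" by blast
qed

lemma card_BS_NB: "card (BS m n) \<le> card (NB m n)"
  by (metis BS_NB card_image_le card_mono finite_NB finite_imageI le_trans)

definition insb :: "nat \<Rightarrow> nat \<Rightarrow> nat list \<Rightarrow> nat list" where
  "insb y m u = concat (map (\<lambda>x. if x = y then [m, y] else [x]) u)"

lemma insb_notin: "y \<notin> set u \<Longrightarrow> insb y m u = u"
  by (induction u) (auto simp: insb_def)

lemma insb_split: "y \<notin> set p \<Longrightarrow> y \<notin> set q \<Longrightarrow> insb y m (p @ y # q) = p @ m # y # q"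
  using insb_notin[of y p m] insb_notin[of y q m] by (simp add: insb_def)

lemma NB_0: "NB 0 n \<subseteq> (if n = 0 then {[]} else {})"
proof
  fix bs assume "bs \<in> NB 0 n"
  then have "set (concat bs) = {}" "[] \<notin> set bs" "length bs = n" by (auto simp: NB_def VB_def)
  then have "bs = []" by (cases bs) auto
  then show "bs \<in> (if n = 0 then {[]} else {})" using \<open>length bs = n\<close> by auto
qed

lemma NB_Suc_0: "NB (Suc m) 0 = {}"
  by (auto simp: NB_def VB_def)

lemma NB_Suc:
  "NB (Suc m) (Suc n) \<subseteq> (\<lambda>bs. bs @ [[m]]) ` NB m n
     \<union> (\<lambda>(k, bs). bs[k := bs ! k @ [m]]) ` ({..<Suc n} \<times> NB m (Suc n))
     \<union> (\<lambda>(y, bs). map (insb y m) bs) ` ({..<m} \<times> NB m (Suc n))"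
  (is "_ \<subseteq> ?A1 \<union> ?A2 \<union> ?A3")
proof
  fix bs assume bs: "bs \<in> NB (Suc m) (Suc n)"
  have len: "length bs = Suc n" and ne: "[] \<notin> set bs" and dc: "distinct (concat bs)"
    and sc: "set (concat bs) = {0..<Suc m}" and so: "sorted (map mn bs)"
    using bs by (auto simp: NB_def VB_def)
  have db: "distinct bs" using dc ne by (rule distinct_blocks)
  have "m \<in> set (concat bs)" using sc by simp
  then obtain u0 where "u0 \<in> set bs" "m \<in> set u0" by auto
  then obtain k where k: "k < length bs" "m \<in> set (bs ! k)"
    by (metis in_set_conv_nth)
  let ?u = "bs ! k"
  have disj: "set (bs ! j) \<inter> set ?u = {}" if "j < length bs" "j \<noteq> k" for j
  proof -
    have "bs ! j \<noteq> ?u" using db that k(1) by (simp add: nth_eq_iff_index_eq)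
    moreover have "bs ! j \<in> set bs" "?u \<in> set bs" using that k(1) by auto
    ultimately show ?thesis using dc by (auto simp: distinct_concat_iff)
  qed
  have dU: "distinct ?u" using dc k(1) by (auto simp: distinct_concat_iff)
  have elem: "x \<in> set (bs ! j) \<Longrightarrow> j < length bs \<Longrightarrow> x < Suc m" for x j
    using sc by (auto simp: set_concat)
  have less: "x \<in> set (bs ! j) \<Longrightarrow> j < length bs \<Longrightarrow> j \<noteq> k \<Longrightarrow> x < m" for x j
    using elem disj k(2) by (metis disjoint_iff less_SucE)
  obtain p q where u: "?u = p @ m # q" using split_list[OF k(2)] by blast
  have tk: "bs = take k bs @ ?u # drop (Suc k) bs" using id_take_nth_drop[OF k(1)] .
  show "bs \<in> ?A1 \<union> ?A2 \<union> ?A3"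
  proof (cases "p = [] \<and> q = []")
    case True
    then have u1: "?u = [m]" using u by simp
    have kn: "k = n"
    proof (rule ccontr)
      assume "k \<noteq> n"
      then have sk: "Suc k < length bs" using k(1) len by simp
      have "mn (bs ! k) \<le> mn (bs ! Suc k)"
        using sorted_nth_mono[OF so, of k "Suc k"] sk by simp
      moreover have "mn ?u = m" using u1 by (simp add: mn_def)
      moreover have "mn (bs ! Suc k) < m"
      proof -
        have "bs ! Suc k \<noteq> []" using ne sk by (metis nth_mem)
        then have "mn (bs ! Suc k) \<in> set (bs ! Suc k)" unfolding mn_def by (intro Min_in) auto
        then show ?thesis using less[of _ "Suc k"] sk by simp
      qed
      ultimately show False by simp
    qed
    let ?b0 = "take n bs"
    have bseq: "bs = ?b0 @ [[m]]"
      using take_Suc_conv_app_nth[of n bs] len u1 kn by simp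
    have "?b0 \<in> NB m n"
    proof -
      have c: "concat bs = concat ?b0 @ [m]" using bseq by (metis concat.simps concat_append append_Nil2)
      have "distinct (concat ?b0)" "m \<notin> set (concat ?b0)" using dc c by simp_all
      moreover have "set (concat ?b0) = {0..<m}"
      proof -
        have "set (concat ?b0) = set (concat bs) - {m}" using c \<open>m \<notin> set (concat ?b0)\<close> by auto
        then show ?thesis using sc by auto
      qed
      moreover have "[] \<notin> set ?b0" using ne by (meson in_set_takeD)
      moreover have "sorted (map mn ?b0)"
        using so bseq by (metis map_append sorted_append)
      moreover have "length ?b0 = n" using len by simp
      ultimately show ?thesis by (simp add: NB_def VB_def)
    qed
    then show ?thesis using bseq by blast
  next
    case False
    define v where "v = p @ q"
    have v0: "v \<noteq> []" using False by (auto simp: v_def)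
    define bs' where "bs' = bs[k := v]"
    have tk': "bs' = take k bs @ v # drop (Suc k) bs"
      unfolding bs'_def using upd_conv_take_nth_drop[OF k(1)] .
    let ?X = "concat (take k bs)" and ?Y = "concat (drop (Suc k) bs)"
    have "concat bs = concat (take k bs @ ?u # drop (Suc k) bs)" by (subst (1) tk) (rule refl)
    then have cb: "concat bs = ?X @ p @ m # q @ ?Y" using u by simp
    have cb': "concat bs' = ?X @ p @ q @ ?Y" using tk' by (simp add: v_def)
    have "m \<notin> set v" using dU u by (simp add: v_def)
    have vless: "x \<in> set v \<Longrightarrow> x < m" for x
    proof -
      assume x: "x \<in> set v"
      then have "x \<in> set ?u" using u by (auto simp: v_def)
      then have "x < Suc m" using elem k(1) by blast
      moreover have "x \<noteq> m" using x \<open>m \<notin> set v\<close> by auto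
      ultimately show "x < m" by simp
    qed
    have mnv: "mn v = mn ?u"
    proof -
      have "set ?u = insert m (set v)" using u by (auto simp: v_def)
      moreover have "Min (set v) < m" using vless v0 by (simp add: Min_less_iff)
      moreover have "Min (insert m (set v)) = min m (Min (set v))" by (rule Min_insert) (use v0 in auto)
      ultimately show ?thesis unfolding mn_def by (simp add: min_def)
    qed
    have bs'NB: "bs' \<in> NB m (Suc n)"
    proof -
      have "length bs' = Suc n" using len by (simp add: bs'_def)
      moreover have "[] \<notin> set bs'" using ne v0 set_update_subset_insert[of bs k v] by (auto simp: bs'_def)
      moreover have "distinct (concat bs')" using dc cb cb' by auto
      moreover have "set (concat bs') = {0..<m}"
      proof -
        have "m \<notin> set (concat bs')" using dc cb cb' by auto
        moreover have "set (concat bs') = set (concat bs) - {m} \<union> (set (concat bs') \<inter> {m})"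
          using cb cb' dc by auto
        ultimately show ?thesis using sc by auto
      qed
      moreover have "map mn bs' = map mn bs"
        unfolding bs'_def map_update using mnv k(1) by (metis list_update_id nth_map)
      then have "sorted (map mn bs')" using so by simp
      ultimately show ?thesis by (simp add: NB_def VB_def)
    qed
    show ?thesis
    proof (cases q)
      case Nil
      then have "p \<noteq> []" using False by simp
      have "bs'[k := bs' ! k @ [m]] = bs"
        using k(1) u Nil by (simp add: bs'_def v_def) (metis list_update_id)
      moreover have "k < Suc n" using k(1) len by simp
      ultimately have "bs \<in> ?A2" using bs'NB by (auto intro!: image_eqI[of _ _ "(k, bs')"])
      then show ?thesis by blast
    next
      case (Cons y q')
      have yu: "y \<in> set ?u" using u Cons by simp
      have "y \<noteq> m" using dU u Cons by auto
      then have ym: "y < m" using elem[OF yu k(1)] by simp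
      have "map (insb y m) bs' = bs"
      proof (rule nth_equalityI)
        show "length (map (insb y m) bs') = length bs" by (simp add: bs'_def)
        fix j assume "j < length (map (insb y m) bs')"
        then have j: "j < length bs" by (simp add: bs'_def)
        show "map (insb y m) bs' ! j = bs ! j"
        proof (cases "j = k")
          case True
          have "y \<notin> set p" "y \<notin> set q'" using dU u Cons by auto
          then show ?thesis using True j u Cons by (simp add: bs'_def v_def insb_split)
        next
          case False
          have "y \<notin> set (bs ! j)" using disj[OF j False] yu by auto
          then show ?thesis using False j by (simp add: bs'_def insb_notin)
        qed
      qed
      then have "bs \<in> ?A3" using bs'NB ym by (auto intro!: image_eqI[of _ _ "(y, bs')"])
      then show ?thesis by blast
    qed
  qed
qed

lemma card_NB_Suc:
  "card (NB (Suc m) (Suc n)) \<le> card (NB m n) + (Suc n + m) * card (NB m (Suc n))"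
proof -
  let ?A1 = "(\<lambda>bs. bs @ [[m]]) ` NB m n"
  let ?A2 = "(\<lambda>(k, bs). bs[k := bs ! k @ [m]]) ` ({..<Suc n} \<times> NB m (Suc n))"
  let ?A3 = "(\<lambda>(y, bs). map (insb y m) bs) ` ({..<m} \<times> NB m (Suc n))"
  have fin: "finite ?A1" "finite ?A2" "finite ?A3" by (auto simp: finite_NB)
  have c0: "card (NB (Suc m) (Suc n)) \<le> card (?A1 \<union> ?A2 \<union> ?A3)"
    by (rule card_mono) (use fin NB_Suc in auto)
  have u1: "card (?A1 \<union> ?A2 \<union> ?A3) \<le> card (?A1 \<union> ?A2) + card ?A3" by (rule card_Un_le)
  have u2: "card (?A1 \<union> ?A2) \<le> card ?A1 + card ?A2" by (rule card_Un_le)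
  have c1: "card ?A1 \<le> card (NB m n)" by (rule card_image_le[OF finite_NB])
  have "card ?A2 \<le> card ({..<Suc n} \<times> NB m (Suc n))" by (rule card_image_le) (simp add: finite_NB)
  then have c2: "card ?A2 \<le> Suc n * card (NB m (Suc n))" by (simp add: card_cartesian_product)
  have "card ?A3 \<le> card ({..<m} \<times> NB m (Suc n))" by (rule card_image_le) (simp add: finite_NB)
  then have c3: "card ?A3 \<le> m * card (NB m (Suc n))" by (simp add: card_cartesian_product)
  have "card (NB (Suc m) (Suc n)) \<le> card (NB m n) + Suc n * card (NB m (Suc n)) + m * card (NB m (Suc n))"
    using c0 u1 u2 c1 c2 c3 by linarith
  then show ?thesis by (simp add: algebra_simps)
qed

fun Lah :: "nat \<Rightarrow> nat \<Rightarrow> nat" where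
  "Lah 0 n = (if n = 0 then 1 else 0)"
| "Lah (Suc m) 0 = 0"
| "Lah (Suc m) (Suc n) = Lah m n + (Suc n + m) * Lah m (Suc n)"

lemma choose_step: "Suc k * (m choose Suc k) = (m - k) * (m choose k)"
  by (metis binomial_absorption binomial_absorb_comp)

lemma Lah_closed: "1 \<le> n \<Longrightarrow> Lah m n * fact (n - 1) = (m choose n) * fact (m - 1)"
proof (induction m arbitrary: n)
  case 0
  then show ?case by simp
next
  case (Suc m)
  then obtain k where n: "n = Suc k" by (cases n) auto
  show ?case
  proof (cases "k = 0")
    case True
    have L1: "Lah m 1 * fact 0 = (m choose 1) * fact (m - 1)" using Suc.IH[of 1] by simp
    show ?thesis
    proof (cases m)
      case 0
      then show ?thesis using n True by simp
    next
      case (Suc m')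
      then have "Lah m 1 = fact m" using L1 by (simp add: fact_Suc)
      then show ?thesis using n True Suc by (simp add: fact_Suc)
    qed
  next
    case False
    then have k1: "1 \<le> k" by simp
    have IH1: "Lah m k * fact (k - 1) = (m choose k) * fact (m - 1)" using Suc.IH[OF k1] .
    have IH2: "Lah m (Suc k) * fact k = (m choose Suc k) * fact (m - 1)" using Suc.IH[of "Suc k"] by simp
    have fk: "fact k = k * (fact (k - 1) :: nat)" using k1 by (cases k) (auto simp: fact_Suc)
    have "Lah (Suc m) n * fact (n - 1) = Lah m k * fact k + (Suc k + m) * (Lah m (Suc k) * fact k)"
      by (simp add: n algebra_simps)
    also have "Lah m k * fact k = k * ((m choose k) * fact (m - 1))"
      using IH1 fk by (simp add: algebra_simps)
    also have "Lah m (Suc k) * fact k = (m choose Suc k) * fact (m - 1)" by (rule IH2)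
    finally have eq: "Lah (Suc m) n * fact (n - 1) =
        (k * (m choose k) + (Suc k + m) * (m choose Suc k)) * fact (m - 1)"
      by (simp add: algebra_simps)
    show ?thesis
    proof (cases m)
      case 0
      then show ?thesis using eq n k1 by simp
    next
      case (Suc m')
      have key: "k * (m choose k) + (Suc k + m) * (m choose Suc k) = m * (Suc m choose Suc k)"
      proof -
        have "Suc k * (m choose Suc k) = (m - k) * (m choose k)" by (rule choose_step)
        moreover have "k * (m choose k) + (m - k) * (m choose k) = m * (m choose k)"
        proof (cases "k \<le> m")
          case True
          then show ?thesis by (simp add: add_mult_distrib[symmetric])
        next
          case False
          then show ?thesis by simp
        qed
        moreover have "(Suc k + m) * (m choose Suc k) = Suc k * (m choose Suc k) + m * (m choose Suc k)"
          by (rule add_mult_distrib)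
        moreover have "m * (Suc m choose Suc k) = m * (m choose k) + m * (m choose Suc k)"
          by (simp add: add_mult_distrib2)
        ultimately show ?thesis by linarith
      qed
      have fm: "fact m = m * (fact (m - 1) :: nat)" using Suc by simp
      have "Lah (Suc m) n * fact (n - 1) = (m * (Suc m choose Suc k)) * fact (m - 1)"
        by (simp only: eq key)
      also have "\<dots> = (Suc m choose Suc k) * fact m"
        by (simp only: fm mult.assoc mult.commute mult.left_commute)
      finally show ?thesis using n by simp
    qed
  qed
qed

lemma Lah_real:
  assumes "1 \<le> n"
  shows "real (Lah m n) = real (m choose n) * (fact (m - 1) / fact (n - 1))"
proof -
  have "real (Lah m n) * fact (n - 1) = real (m choose n) * fact (m - 1)"
    using Lah_closed[OF assms, of m] by (metis of_nat_fact of_nat_mult)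
  then show ?thesis by (simp add: field_simps)
qed


lemma card_NB_Lah: "card (NB m n) \<le> Lah m n"
proof (induction m arbitrary: n)
  case 0
  show ?case
  proof (cases n)
    case 0
    have "NB 0 n \<subseteq> {[]}" using NB_0[of n] 0 by simp
    then have "card (NB 0 n) \<le> card {[]::nat list list}" by (rule card_mono[rotated]) simp
    then show ?thesis using 0 by simp
  next
    case (Suc n')
    then have "NB 0 n = {}" using NB_0[of n] by simp
    then show ?thesis by simp
  qed
next
  case (Suc m)
  show ?case
  proof (cases n)
    case 0
    then show ?thesis by (simp add: NB_Suc_0)
  next
    case (Suc n')
    have "card (NB (Suc m) (Suc n')) \<le> card (NB m n') + (Suc n' + m) * card (NB m (Suc n'))"
      by (rule card_NB_Suc)
    also have "\<dots> \<le> Lah m n' + (Suc n' + m) * Lah m (Suc n')"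
      using Suc.IH[of n'] Suc.IH[of "Suc n'"] by (intro add_mono mult_le_mono2)
    finally show ?thesis using Suc by simp
  qed
qed

lemma W_span:
  assumes n: "1 \<le> n"
  shows "W n m \<subseteq> nc.span (Sgen m n :: 'a::field_char_0 ncpoly set)"
proof
  fix p :: "'a ncpoly" assume "p \<in> W n m"
  then have pV: "p \<in> V m" and pT: "p \<in> T_ideal (x_pow n)" by (auto simp: W_def)
  obtain P where P: "p = lk P" "P \<in> Sp n" using T_ideal_Sp[OF n pT] by blast
  have "proj m P = p" using proj_V pV P(1) by metis
  then show "p \<in> nc.span (Sgen m n)" using Sp_proj[OF P(2), of m] by simp
qed

theorem lemma5p1:
  fixes n m :: nat
  assumes "1 \<le> n" and "n \<le> m"
  shows "real (ncdim (W n m :: ('a::field_char_0) ncpoly set))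
           \<le> real (m choose n) * (fact (m - 1) / fact (n - 1))"
proof -
  have fin: "finite (Sgen m n :: 'a ncpoly set)" by (simp add: Sgen_def finite_BS)
  have "ncdim (W n m :: 'a ncpoly set) \<le> card (Sgen m n :: 'a ncpoly set)"
    unfolding ncdim_def by (rule nc.dim_le_card[OF W_span[OF assms(1)] fin])
  also have "\<dots> \<le> card (BS m n)" by (simp add: Sgen_def card_image_le finite_BS)
  also have "\<dots> \<le> card (NB m n)" by (rule card_BS_NB)
  also have "\<dots> \<le> Lah m n" by (rule card_NB_Lah)
  finally have "real (ncdim (W n m :: 'a ncpoly set)) \<le> real (Lah m n)" by simp
  then show ?thesis using Lah_real[OF assms(1)] by simp
qed

end
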